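(* Consider an instance of $k$-robust set cover with universe $U$ of $n$ elements and $m$ sets, and a threshold $T\ge0$. Let $\beta=36\ln m$, let $S$ be the set of elements $v\in U$ such that the minimum cost of a set covering $v$ is at least $\beta\cdot\frac{T}{k}$, and let $\Phi_T$ be the set cover of $S$ produced by the greedy set cover algorithm. Let $\Phi^*$ and $T^*$ denote the first-stage cost and second-stage cost of an optimal solution of the $k$-robust instance. If $T\ge T^*$ then $c(\Phi_T)\le H_n\cdot(\Phi^*+12\cdot T^* )$.
   Context: $k$-robust set cover: universe $U$, $|U|=n$, family $\mathcal{F}$ of $m$ sets with costs $c_R\ge0$, inflation $\lambda\ge1$, integer $k\ge1$. A feasible solution is a first-stage family $E_0\subseteq\mathcal{F}$ and for each $D\subseteq U$ with $|D|=k$ a family $E_D$ such that $E_0\cup E_D$ covers $D$; its cost is $c(E_0)+\lambda\max_{|D|=k}c(E_D)$, with first-stage cost $c(E_0)$ and second-stage cost $\max_D c(E_D)$. The greedy set cover algorithm repeatedly picks a set minimizing the ratio of its cost to the number of still-uncovered elements of $S$ it contains. $H_n=\sum_{i=1}^n\frac1i$. *)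

theory Defs
  imports "HOL-Analysis.Harmonic_Numbers"
begin

definition rsc_instance :: "'a set \<Rightarrow> 'a set set \<Rightarrow> ('a set \<Rightarrow> real) \<Rightarrow> real \<Rightarrow> nat \<Rightarrow> bool" where
  "rsc_instance U F c lam k \<longleftrightarrow> finite U \<and> finite F \<and> (\<forall>R\<in>F. R \<subseteq> U) \<and>
     (\<forall>R\<in>F. 0 \<le> c R) \<and> lam \<ge> 1 \<and> k \<ge> 1"

definition scenarios :: "'a set \<Rightarrow> nat \<Rightarrow> 'a set set" where
  "scenarios U k = {D. D \<subseteq> U \<and> card D = k}"

definition rsc_feasible :: "'a set \<Rightarrow> 'a set set \<Rightarrow> nat \<Rightarrow> 'a set set \<Rightarrow> ('a set \<Rightarrow> 'a set set) \<Rightarrow> bool" where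
  "rsc_feasible U F k E0 ED \<longleftrightarrow> E0 \<subseteq> F \<and>
     (\<forall>D\<in>scenarios U k. ED D \<subseteq> F \<and> D \<subseteq> \<Union>(E0 \<union> ED D))"

definition first_stage_cost :: "('a set \<Rightarrow> real) \<Rightarrow> 'a set set \<Rightarrow> real" where
  "first_stage_cost c E0 = sum c E0"

text \<open>Second-stage cost: max over scenarios (0 if there are none; costs are nonnegative).\<close>
definition second_stage_cost :: "'a set \<Rightarrow> nat \<Rightarrow> ('a set \<Rightarrow> real) \<Rightarrow> ('a set \<Rightarrow> 'a set set) \<Rightarrow> real" where
  "second_stage_cost U k c ED = Max (insert 0 ((\<lambda>D. sum c (ED D)) ` scenarios U k))"

definition rsc_cost :: "'a set \<Rightarrow> nat \<Rightarrow> ('a set \<Rightarrow> real) \<Rightarrow> real \<Rightarrow> 'a set set \<Rightarrow> ('a set \<Rightarrow> 'a set set) \<Rightarrow> real" where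
  "rsc_cost U k c lam E0 ED = first_stage_cost c E0 + lam * second_stage_cost U k c ED"

definition rsc_optimal :: "'a set \<Rightarrow> 'a set set \<Rightarrow> ('a set \<Rightarrow> real) \<Rightarrow> real \<Rightarrow> nat \<Rightarrow> 'a set set \<Rightarrow> ('a set \<Rightarrow> 'a set set) \<Rightarrow> bool" where
  "rsc_optimal U F c lam k E0 ED \<longleftrightarrow> rsc_feasible U F k E0 ED \<and>
     (\<forall>E0' ED'. rsc_feasible U F k E0' ED' \<longrightarrow> rsc_cost U k c lam E0 ED \<le> rsc_cost U k c lam E0' ED')"

text \<open>Any tie-breaking is allowed.\<close>
definition greedy_run :: "'a set set \<Rightarrow> ('a set \<Rightarrow> real) \<Rightarrow> 'a set \<Rightarrow> 'a set list \<Rightarrow> bool" where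
  "greedy_run F c S xs \<longleftrightarrow>
     (\<forall>i<length xs. let W = S - \<Union>(set (take i xs)) in
        xs ! i \<in> F \<and> xs ! i \<inter> W \<noteq> {} \<and>
        (\<forall>R\<in>F. R \<inter> W \<noteq> {} \<longrightarrow>
           c (xs ! i) / real (card (xs ! i \<inter> W)) \<le> c R / real (card (R \<inter> W)))) \<and>
     S \<subseteq> \<Union>(set xs)"

end

theory Submission
  imports Defs
begin


lemma harm_count:
  fixes f :: "'b \<Rightarrow> nat"
  assumes "finite A"
  shows "(\<Sum>e\<in>A. 1 / real (card {e'\<in>A. f e \<le> f e'})) \<le> harm (card A)"
  using assms
proof (induction "card A" arbitrary: A)
  case 0
  then show ?case by (simp add: harm_nonneg)
next
  case (Suc n)
  then have ne: "A \<noteq> {}" by auto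
  obtain e0 where e0: "e0 \<in> A" "\<forall>e\<in>A. f e0 \<le> f e"
  proof -
    have "Min (f ` A) \<in> f ` A" using Suc.prems ne by (intro Min_in) auto
    then obtain e0 where "e0 \<in> A" "f e0 = Min (f ` A)" by auto
    moreover have "\<forall>e\<in>A. Min (f ` A) \<le> f e" using Suc.prems by auto
    ultimately show ?thesis using that by auto
  qed
  let ?B = "A - {e0}"
  have cB: "card ?B = n" using Suc e0 by simp
  have fB: "finite ?B" using Suc by simp
  have "{e'\<in>A. f e0 \<le> f e'} = A" using e0 by auto
  hence c0: "card {e'\<in>A. f e0 \<le> f e'} = card A" by simp
  have le: "1 / real (card {e'\<in>A. f e \<le> f e'}) \<le> 1 / real (card {e'\<in>?B. f e \<le> f e'})"
    if "e \<in> ?B" for e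
  proof -
    have "{e'\<in>?B. f e \<le> f e'} \<subseteq> {e'\<in>A. f e \<le> f e'}" by auto
    hence "card {e'\<in>?B. f e \<le> f e'} \<le> card {e'\<in>A. f e \<le> f e'}"
      using Suc.prems by (intro card_mono) auto
    moreover have "card {e'\<in>?B. f e \<le> f e'} > 0"
      using that fB by (subst card_gt_0_iff) auto
    ultimately show ?thesis by (simp add: frac_le)
  qed
  have "(\<Sum>e\<in>A. 1 / real (card {e'\<in>A. f e \<le> f e'}))
      = 1 / real (card A) + (\<Sum>e\<in>?B. 1 / real (card {e'\<in>A. f e \<le> f e'}))"
    using Suc.prems e0 c0 by (simp add: sum.remove)
  also have "\<dots> \<le> 1 / real (card A) + (\<Sum>e\<in>?B. 1 / real (card {e'\<in>?B. f e \<le> f e'}))"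
    using le by (intro add_left_mono sum_mono) auto
  also have "\<dots> \<le> 1 / real (card A) + harm n"
    using Suc.hyps(1)[OF cB[symmetric] fB] cB by simp
  also have "\<dots> = harm (card A)" using Suc.hyps(2)[symmetric]
    by (simp add: harm_Suc field_simps)
  finally show ?case .
qed



definition gtime :: "'a set list \<Rightarrow> 'a \<Rightarrow> nat" where
  "gtime xs e = (LEAST i. i < length xs \<and> e \<in> xs ! i)"

definition gW :: "'a set \<Rightarrow> 'a set list \<Rightarrow> nat \<Rightarrow> 'a set" where
  "gW S xs i = S - \<Union>(set (take i xs))"

definition gprice :: "('a set \<Rightarrow> real) \<Rightarrow> 'a set \<Rightarrow> 'a set list \<Rightarrow> 'a \<Rightarrow> real" where
  "gprice c S xs e = c (xs ! gtime xs e) / real (card (xs ! gtime xs e \<inter> gW S xs (gtime xs e)))"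

lemma gtime_props:
  assumes "S \<subseteq> \<Union>(set xs)" "e \<in> S"
  shows "gtime xs e < length xs" "e \<in> xs ! gtime xs e" "\<And>j. j < gtime xs e \<Longrightarrow> e \<notin> xs ! j"
proof -
  have ex: "\<exists>i. i < length xs \<and> e \<in> xs ! i"
    using assms by (metis UnionE in_set_conv_nth subsetD)
  show "gtime xs e < length xs" "e \<in> xs ! gtime xs e"
    using LeastI_ex[OF ex] unfolding gtime_def by auto
  fix j assume "j < gtime xs e"
  then show "e \<notin> xs ! j"
    using not_less_Least[of j "\<lambda>i. i < length xs \<and> e \<in> xs ! i"] LeastI_ex[OF ex]
    unfolding gtime_def by auto
qed

lemma gtime_le:
  assumes "i < length xs" "e \<in> xs ! i"
  shows "gtime xs e \<le> i"
  unfolding gtime_def using assms by (intro Least_le) auto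

lemma in_set_take_nth: "x \<in> set (take i xs) \<longleftrightarrow> (\<exists>j. j < i \<and> j < length xs \<and> xs ! j = x)"
  by (auto simp: in_set_conv_nth)

lemma gW_iff:
  assumes "S \<subseteq> \<Union>(set xs)"
  shows "e \<in> gW S xs i \<longleftrightarrow> e \<in> S \<and> i \<le> gtime xs e"
proof
  assume a: "e \<in> gW S xs i"
  then have eS: "e \<in> S" by (simp add: gW_def)
  have "\<not> gtime xs e < i"
  proof
    assume "gtime xs e < i"
    then have "xs ! gtime xs e \<in> set (take i xs)"
      using gtime_props(1)[OF assms eS] by (auto simp: in_set_take_nth)
    then show False using a gtime_props(2)[OF assms eS] by (auto simp: gW_def)
  qed
  then show "e \<in> S \<and> i \<le> gtime xs e" using eS by simp
next
  assume a: "e \<in> S \<and> i \<le> gtime xs e"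
  then show "e \<in> gW S xs i"
    using gtime_props(3)[OF assms] by (auto simp: gW_def in_set_take_nth)
qed

lemma gstep:
  assumes "greedy_run F c S xs" "i < length xs"
  shows "xs!i \<in> F \<and> xs!i \<inter> gW S xs i \<noteq> {} \<and> (\<forall>R\<in>F. R \<inter> gW S xs i \<noteq> {} \<longrightarrow>
     c (xs!i) / real (card (xs!i \<inter> gW S xs i)) \<le> c R / real (card (R \<inter> gW S xs i)))"
proof -
  have "\<forall>i<length xs. let W = S - \<Union>(set (take i xs)) in
        xs ! i \<in> F \<and> xs ! i \<inter> W \<noteq> {} \<and>
        (\<forall>R\<in>F. R \<inter> W \<noteq> {} \<longrightarrow>
           c (xs ! i) / real (card (xs ! i \<inter> W)) \<le> c R / real (card (R \<inter> W)))"
    using assms(1) unfolding greedy_run_def by (rule conjunct1)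
  then have "let W = S - \<Union>(set (take i xs)) in
        xs ! i \<in> F \<and> xs ! i \<inter> W \<noteq> {} \<and>
        (\<forall>R\<in>F. R \<inter> W \<noteq> {} \<longrightarrow>
           c (xs ! i) / real (card (xs ! i \<inter> W)) \<le> c R / real (card (R \<inter> W)))"
    using assms(2) by blast
  then show ?thesis unfolding Let_def gW_def .
qed

lemma gprice_nonneg:
  assumes "greedy_run F c S xs" "\<forall>R\<in>F. 0 \<le> c R" "e \<in> S"
  shows "0 \<le> gprice c S xs e"
proof -
  have cov: "S \<subseteq> \<Union>(set xs)" using assms(1) by (simp add: greedy_run_def)
  have "xs ! gtime xs e \<in> F" using gstep[OF assms(1) gtime_props(1)[OF cov assms(3)]]
    by blast
  then show ?thesis using assms(2) by (simp add: gprice_def)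
qed

lemma greedy_cost:
  assumes g: "greedy_run F c S xs" and cnn: "\<forall>R\<in>F. 0 \<le> c R" and fS: "finite S"
  shows "sum c (set xs) \<le> (\<Sum>e\<in>S. gprice c S xs e)"
proof -
  have cov: "S \<subseteq> \<Union>(set xs)" using g by (simp add: greedy_run_def)
  have gi: "xs ! i \<in> F \<and> xs ! i \<inter> gW S xs i \<noteq> {}" if "i < length xs" for i
    using gstep[OF g that] by blast
  have blk: "{e \<in> S. gtime xs e = i} = xs ! i \<inter> gW S xs i" if "i < length xs" for i
  proof
    show "{e \<in> S. gtime xs e = i} \<subseteq> xs ! i \<inter> gW S xs i"
      using gtime_props(2)[OF cov] gW_iff[OF cov] by auto
    show "xs ! i \<inter> gW S xs i \<subseteq> {e \<in> S. gtime xs e = i}"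
    proof
      fix e assume e: "e \<in> xs ! i \<inter> gW S xs i"
      then have "e \<in> S" "i \<le> gtime xs e" using gW_iff[OF cov] by auto
      moreover have "gtime xs e \<le> i" using gtime_le[OF that] e by auto
      ultimately show "e \<in> {e \<in> S. gtime xs e = i}" by simp
    qed
  qed
  have "set xs = (\<lambda>i. xs ! i) ` {..<length xs}" by (auto simp: in_set_conv_nth)
  then have "sum c (set xs) \<le> (\<Sum>i<length xs. c (xs ! i))"
    using sum_image_le[of "{..<length xs}" c "\<lambda>i. xs ! i"] gi cnn by (simp add: o_def)
  also have "\<dots> = (\<Sum>i<length xs. \<Sum>e\<in>{e \<in> S. gtime xs e = i}. gprice c S xs e)"
  proof (rule sum.cong[OF refl])
    fix i assume "i \<in> {..<length xs}"
    then have i: "i < length xs" by simp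
    have fin: "finite (xs ! i \<inter> gW S xs i)" using fS by (simp add: gW_def)
    have pos: "card (xs ! i \<inter> gW S xs i) > 0" using gi[OF i] fin by (simp add: card_gt_0_iff)
    have "(\<Sum>e\<in>{e \<in> S. gtime xs e = i}. gprice c S xs e)
        = (\<Sum>e\<in>xs ! i \<inter> gW S xs i. c (xs ! i) / real (card (xs ! i \<inter> gW S xs i)))"
      unfolding blk[OF i] by (intro sum.cong refl) (auto simp: gprice_def blk[OF i, symmetric])
    also have "\<dots> = c (xs ! i)" using pos by simp
    finally show "c (xs ! i) = (\<Sum>e\<in>{e \<in> S. gtime xs e = i}. gprice c S xs e)" by simp
  qed
  also have "\<dots> = (\<Sum>e\<in>S. gprice c S xs e)"
    using sum.group[OF fS, of "{..<length xs}" "gtime xs" "gprice c S xs"] gtime_props(1)[OF cov]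
    by auto
  finally show ?thesis .
qed

lemma greedy_set:
  assumes g: "greedy_run F c S xs" and cnn: "\<forall>R\<in>F. 0 \<le> c R" and fS: "finite S" and R: "R \<in> F"
  shows "(\<Sum>e\<in>R \<inter> S. gprice c S xs e) \<le> harm (card (R \<inter> S)) * c R"
proof -
  have cov: "S \<subseteq> \<Union>(set xs)" using g by (simp add: greedy_run_def)
  let ?A = "R \<inter> S"
  have fA: "finite ?A" using fS by simp
  have b: "gprice c S xs e \<le> c R * (1 / real (card {e'\<in>?A. gtime xs e \<le> gtime xs e'}))"
    if e: "e \<in> ?A" for e
  proof -
    let ?i = "gtime xs e"
    have i: "?i < length xs" using gtime_props(1)[OF cov] e by auto
    have eW: "e \<in> gW S xs ?i" using gW_iff[OF cov] e by auto
    have "R \<inter> gW S xs ?i \<noteq> {}" using eW e by auto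
    then have r: "gprice c S xs e \<le> c R / real (card (R \<inter> gW S xs ?i))"
      using gstep[OF g i] R unfolding gprice_def by blast
    have eq: "R \<inter> gW S xs ?i = {e'\<in>?A. gtime xs e \<le> gtime xs e'}"
      using gW_iff[OF cov] by auto
    have fin: "finite {e'\<in>?A. gtime xs e \<le> gtime xs e'}"
      using fA by (rule finite_subset[rotated]) auto
    have pos: "card {e'\<in>?A. gtime xs e \<le> gtime xs e'} > 0"
      using e fin by (subst card_gt_0_iff) auto
    show ?thesis using r unfolding eq by simp
  qed
  have "(\<Sum>e\<in>?A. gprice c S xs e) \<le> (\<Sum>e\<in>?A. c R * (1 / real (card {e'\<in>?A. gtime xs e \<le> gtime xs e'})))"
    using b by (intro sum_mono) auto
  also have "\<dots> = c R * (\<Sum>e\<in>?A. 1 / real (card {e'\<in>?A. gtime xs e \<le> gtime xs e'}))"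
    by (simp add: sum_distrib_left)
  also have "\<dots> \<le> c R * harm (card ?A)"
    using harm_count[OF fA, of "gtime xs"] cnn R by (intro mult_left_mono) auto
  finally show ?thesis by (simp add: mult.commute)
qed



lemma ln2_half: "ln (2::real) \<ge> 1/2"
proof -
  have "ln (1/2::real) \<le> 1/2 - 1" by (rule ln_le_minus_one) simp
  then show ?thesis by (simp add: ln_div)
qed

lemma extend_scenario:
  assumes "finite U" "A \<subseteq> U" "card A \<le> k" "k \<le> card U"
  shows "\<exists>D. D \<subseteq> U \<and> card D = k \<and> A \<subseteq> D"
proof -
  have fA: "finite A" using assms finite_subset by blast
  have "k - card A \<le> card (U - A)" using assms fA by (simp add: card_Diff_subset)
  then obtain T where T: "T \<subseteq> U - A" "card T = k - card A" "finite T"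
    by (rule obtain_subset_with_card_n)
  have "card (A \<union> T) = card A + card T" using T fA by (intro card_Un_disjoint) auto
  then show ?thesis using T assms by (intro exI[of _ "A \<union> T"]) auto
qed

lemma count_families:
  assumes fF: "finite F" and m2: "card F \<ge> 2" and sub: "\<And>G. G \<in> GG \<Longrightarrow> G \<subseteq> F"
    and bd: "\<And>G. G \<in> GG \<Longrightarrow> real (card G) * (36 * ln (real (card F))) \<le> real k"
    and ne: "GG \<noteq> {}" and fGG: "finite GG"
  shows "real (card GG) \<le> 4 ^ k"
proof -
  let ?m = "card F"
  define r where "r = Max (card ` GG)"
  have "r \<in> card ` GG" unfolding r_def using ne fGG by (intro Max_in) auto
  then obtain G0 where G0: "G0 \<in> GG" "r = card G0" by auto
  have rle: "card G \<le> r" if "G \<in> GG" for G unfolding r_def using that fGG by auto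
  have lnm: "ln (real ?m) \<ge> ln 2" using m2 by simp
  have l2: "ln (2::real) \<ge> 1/2" by (rule ln2_half)
  have rb: "real r * (36 * ln (real ?m)) \<le> real k" using bd[OF G0(1)] G0(2) by simp
  have rk: "r \<le> k"
  proof -
    have "real r * 1 \<le> real r * (36 * ln (real ?m))"
      using lnm l2 by (intro mult_left_mono) auto
    then show ?thesis using rb by simp
  qed
  have "GG \<subseteq> set ` {xs. set xs \<subseteq> F \<and> length xs \<le> r}"
  proof
    fix G assume G: "G \<in> GG"
    have "finite G" using sub[OF G] fF finite_subset by blast
    then obtain xs where "set xs = G" "distinct xs" using finite_distinct_list by blast
    then show "G \<in> set ` {xs. set xs \<subseteq> F \<and> length xs \<le> r}"
      using sub[OF G] rle[OF G] distinct_card[of xs] by auto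
  qed
  then have "card GG \<le> card (set ` {xs. set xs \<subseteq> F \<and> length xs \<le> r})"
    using fF by (intro card_mono finite_imageI finite_lists_length_le) auto
  also have "\<dots> \<le> card {xs. set xs \<subseteq> F \<and> length xs \<le> r}" by (rule card_image_le) (use fF finite_lists_length_le in auto)
  also have "\<dots> = (\<Sum>i\<le>r. ?m ^ i)" using card_lists_length_le[OF fF] by simp
  also have "\<dots> \<le> (\<Sum>i\<le>r. ?m ^ r)"
    using m2 by (intro sum_mono power_increasing) auto
  also have "\<dots> = (r+1) * ?m ^ r" by simp
  finally have c: "real (card GG) \<le> real (r+1) * real ?m ^ r" by (metis of_nat_le_iff of_nat_mult of_nat_power)
  have a: "real (r+1) \<le> 2 ^ k"
  proof -
    have "r + 1 \<le> 2 ^ k" using rk less_exp[of k] by linarith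
    then show ?thesis by (metis of_nat_le_iff of_nat_numeral of_nat_power)
  qed
  have b: "real ?m ^ r \<le> 2 ^ k"
  proof -
    have mpos: "real ?m > 0" using m2 by simp
    have "real ?m ^ r = exp (real r * ln (real ?m))"
      using mpos by (simp add: powr_realpow[symmetric] powr_def)
    also have "\<dots> \<le> exp (real k * ln 2)"
    proof -
      have "real r * ln (real ?m) \<le> real k / 36" using rb by simp
      also have "\<dots> \<le> real k * ln 2"
      proof -
        have "real k * (1/36) \<le> real k * ln 2" using l2 by (intro mult_left_mono) auto
        then show ?thesis by simp
      qed
      finally show ?thesis by simp
    qed
    also have "\<dots> = 2 ^ k" by (simp add: powr_realpow[symmetric] powr_def)
    finally show ?thesis .
  qed
  have "real (r+1) * real ?m ^ r \<le> 2 ^ k * 2 ^ k"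
    using a b by (intro mult_mono) auto
  also have "\<dots> = 4 ^ k" by (simp add: power_mult_distrib[symmetric])
  finally show ?thesis using c by linarith
qed



lemma fam_bound:
  assumes g: "greedy_run F c S xs" and cnn: "\<forall>R\<in>F. 0 \<le> c R" and fS: "finite S"
    and fF: "finite F" and GF: "G \<subseteq> F" and n: "\<And>R. R \<in> F \<Longrightarrow> card (R \<inter> S) \<le> n"
  shows "(\<Sum>e\<in>S \<inter> \<Union>G. gprice c S xs e) \<le> harm n * sum c G"
proof -
  let ?p = "gprice c S xs"
  let ?A = "S \<inter> \<Union>G"
  have fG: "finite G" using fF GF finite_subset by blast
  have pnn: "\<And>e. e \<in> S \<Longrightarrow> 0 \<le> ?p e" using gprice_nonneg[OF g cnn] by blast
  have "(\<Sum>e\<in>?A. ?p e) \<le> (\<Sum>e\<in>?A. \<Sum>R\<in>G. if e \<in> R then ?p e else 0)"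
  proof (rule sum_mono)
    fix e assume e: "e \<in> ?A"
    then obtain R where R: "R \<in> G" "e \<in> R" by auto
    have "?p e = (if e \<in> R then ?p e else 0)" using R by simp
    also have "\<dots> \<le> (\<Sum>R\<in>G. if e \<in> R then ?p e else 0)"
      by (rule member_le_sum[OF R(1)]) (use pnn e fG in auto)
    finally show "?p e \<le> (\<Sum>R\<in>G. if e \<in> R then ?p e else 0)" .
  qed
  also have "\<dots> = (\<Sum>R\<in>G. \<Sum>e\<in>?A. if e \<in> R then ?p e else 0)" by (rule sum.swap)
  also have "\<dots> = (\<Sum>R\<in>G. \<Sum>e\<in>R \<inter> S. ?p e)"
  proof (rule sum.cong[OF refl])
    fix R assume R: "R \<in> G"
    have "(\<Sum>e\<in>?A. if e \<in> R then ?p e else 0) = (\<Sum>e\<in>?A \<inter> R. ?p e)"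
      using fS by (simp add: sum.inter_restrict)
    also have "?A \<inter> R = R \<inter> S" using R by auto
    finally show "(\<Sum>e\<in>?A. if e \<in> R then ?p e else 0) = (\<Sum>e\<in>R \<inter> S. ?p e)" .
  qed
  also have "\<dots> \<le> (\<Sum>R\<in>G. harm n * c R)"
  proof (rule sum_mono)
    fix R assume R: "R \<in> G"
    then have RF: "R \<in> F" using GF by auto
    have "(\<Sum>e\<in>R \<inter> S. ?p e) \<le> harm (card (R \<inter> S)) * c R" by (rule greedy_set[OF g cnn fS RF])
    also have "\<dots> \<le> harm n * c R"
      using cnn RF n[OF RF] by (intro mult_right_mono harm_mono) auto
    finally show "(\<Sum>e\<in>R \<inter> S. ?p e) \<le> harm n * c R" .
  qed
  also have "\<dots> = harm n * sum c G" by (simp add: sum_distrib_left)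
  finally show ?thesis .
qed

theorem mainTheorem13:
  fixes U :: "'a set" and F :: "'a set set" and c :: "'a set \<Rightarrow> real"
    and lam T :: real and k :: nat
    and E0 :: "'a set set" and ED :: "'a set \<Rightarrow> 'a set set" and xs :: "'a set list"
  assumes inst: "rsc_instance U F c lam k"
    and kn: "k \<le> card U"
    and T0: "T \<ge> 0"
    and opt: "rsc_optimal U F c lam k E0 ED"
    and TT: "T \<ge> second_stage_cost U k c ED"
    and greedy: "greedy_run F c
        {v \<in> U. \<forall>R\<in>F. v \<in> R \<longrightarrow> c R \<ge> (36 * ln (real (card F))) * (T / real k)} xs"
  shows "sum c (set xs) \<le> harm (card U) *
           (first_stage_cost c E0 + 12 * second_stage_cost U k c ED)"
proof -
  define S where "S = {v \<in> U. \<forall>R\<in>F. v \<in> R \<longrightarrow> c R \<ge> (36 * ln (real (card F))) * (T / real k)}"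
  define t where "t = second_stage_cost U k c ED"
  define H :: real where "H = harm (card U)"
  define S' where "S' = S - \<Union>E0"
  define p where "p = gprice c S xs"
  have g: "greedy_run F c S xs" using greedy S_def by simp
  have fU: "finite U" and fF: "finite F" and RU: "\<forall>R\<in>F. R \<subseteq> U" and cnn: "\<forall>R\<in>F. 0 \<le> c R"
    and k1: "k \<ge> 1" using inst by (auto simp: rsc_instance_def)
  have E0F: "E0 \<subseteq> F" and feas: "\<And>D. D \<in> scenarios U k \<Longrightarrow> ED D \<subseteq> F \<and> D \<subseteq> \<Union>(E0 \<union> ED D)"
    using opt by (auto simp: rsc_optimal_def rsc_feasible_def)
  have fsc: "finite (scenarios U k)"
  proof -
    have "scenarios U k \<subseteq> Pow U" unfolding scenarios_def by auto
    then show ?thesis using fU finite_subset by blast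
  qed
  have edc: "sum c (ED D) \<le> t" if "D \<in> scenarios U k" for D
    unfolding t_def second_stage_cost_def using fsc that by (intro Max_ge) auto
  have t0: "t \<ge> 0" unfolding t_def second_stage_cost_def using fsc by (intro Max_ge) auto
  have H0: "H \<ge> 0" unfolding H_def by (rule harm_nonneg)
  have SU: "S \<subseteq> U" unfolding S_def by auto
  have fS: "finite S" using SU fU finite_subset by blast
  have fS': "finite S'" using fS unfolding S'_def by simp
  have pnn: "\<And>e. e \<in> S \<Longrightarrow> 0 \<le> p e" unfolding p_def using gprice_nonneg[OF g cnn] by blast
  have nb: "\<And>R. R \<in> F \<Longrightarrow> card (R \<inter> S) \<le> card U"
    using SU fU by (intro card_mono) auto
  have fam: "(\<Sum>e\<in>S \<inter> \<Union>G. p e) \<le> H * sum c G" if "G \<subseteq> F" for G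
    unfolding p_def H_def by (rule fam_bound[OF g cnn fS fF that nb])
  have main1: "sum c (set xs) \<le> (\<Sum>e\<in>S \<inter> \<Union>E0. p e) + (\<Sum>e\<in>S'. p e)"
    using greedy_cost[OF g cnn fS] sum.Int_Diff[OF fS, of p "\<Union>E0"] unfolding p_def S'_def by simp
  have part1: "(\<Sum>e\<in>S \<inter> \<Union>E0. p e) \<le> H * first_stage_cost c E0"
    using fam[OF E0F] by (simp add: first_stage_cost_def)
  have key: "(\<Sum>e\<in>S'. p e) \<le> 12 * H * t"
  proof (rule ccontr)
    assume "\<not> (\<Sum>e\<in>S'. p e) \<le> 12 * H * t"
    then have Pbig: "(\<Sum>e\<in>S'. p e) > 12 * H * t" by simp
    define P where "P = (\<Sum>e\<in>S'. p e)"
    have "12 * H * t \<ge> 0" using H0 t0 by simp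
    then have Ppos: "P > 0" using Pbig unfolding P_def by linarith
    have S'S: "S' \<subseteq> S" unfolding S'_def by auto
    define w where "w e = p e / P" for e
    have wnn: "\<And>e. e \<in> S' \<Longrightarrow> 0 \<le> w e" unfolding w_def using pnn S'S Ppos by auto
    define Seq where "Seq = PiE {..<k} (\<lambda>_. S')"
    have fSeq: "finite Seq" unfolding Seq_def using fS' by (intro finite_PiE) auto
    have sumw: "(\<Sum>e\<in>S'. w e) = 1" unfolding w_def using Ppos
      by (simp add: sum_divide_distrib[symmetric] P_def)
    have one: "(\<Sum>g\<in>Seq. \<Prod>i<k. w (g i)) = 1"
    proof -
      have "(\<Prod>i<k. \<Sum>e\<in>S'. w e) = (\<Sum>g\<in>Seq. \<Prod>i<k. w (g i))"
        unfolding Seq_def using fS' by (intro prod_sum_PiE) auto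
      then show ?thesis using sumw by simp
    qed
    have exD: "\<exists>D. D \<in> scenarios U k \<and> g ` {..<k} \<subseteq> D" if "g \<in> Seq" for g
    proof -
      have A: "g ` {..<k} \<subseteq> U" using that S'S SU unfolding Seq_def by (auto simp: PiE_iff)
      have "card (g ` {..<k}) \<le> k" using card_image_le[of "{..<k}" g] by simp
      then show ?thesis using extend_scenario[OF fU A _ kn] unfolding scenarios_def by auto
    qed
    define Df where "Df g = (SOME D. D \<in> scenarios U k \<and> g ` {..<k} \<subseteq> D)" for g
    have Df: "Df g \<in> scenarios U k \<and> g ` {..<k} \<subseteq> Df g" if "g \<in> Seq" for g
      unfolding Df_def using someI_ex[OF exD[OF that]] .
    define Gf where "Gf g = {R \<in> ED (Df g). R \<inter> S' \<noteq> {}}" for g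
    have GfF: "Gf g \<subseteq> F" if "g \<in> Seq" for g using feas[of "Df g"] Df[OF that] unfolding Gf_def by auto
    have Gfc: "sum c (Gf g) \<le> t" if "g \<in> Seq" for g
    proof -
      have fin: "finite (ED (Df g))" using feas[of "Df g"] Df[OF that] fF finite_subset by blast
      have "sum c (Gf g) \<le> sum c (ED (Df g))"
        unfolding Gf_def using fin cnn feas[of "Df g"] Df[OF that] by (intro sum_mono2) auto
      then show ?thesis using edc Df[OF that] by force
    qed
    have Gfcov: "g ` {..<k} \<subseteq> S' \<inter> \<Union>(Gf g)" if "g \<in> Seq" for g
    proof
      fix x assume x: "x \<in> g ` {..<k}"
      then have xS': "x \<in> S'" using that unfolding Seq_def by (auto simp: PiE_iff)
      have "x \<in> \<Union>(E0 \<union> ED (Df g))" using feas[of "Df g"] Df[OF that] x by blast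
      moreover have "x \<notin> \<Union>E0" using xS' unfolding S'_def by auto
      ultimately obtain R where "R \<in> ED (Df g)" "x \<in> R" by auto
      then show "x \<in> S' \<inter> \<Union>(Gf g)" using xS' unfolding Gf_def by auto
    qed
    define GG where "GG = Gf ` Seq"
    have fGG: "finite GG" unfolding GG_def using fSeq by simp
    define mass where "mass G = (\<Sum>e\<in>S' \<inter> \<Union>G. w e)" for G
    define q where "q = H * t / P"
    have q0: "q \<ge> 0" unfolding q_def using H0 t0 Ppos by simp
    have q12: "q < 1/12" unfolding q_def using Pbig Ppos unfolding P_def
      by (simp add: divide_simps) 
    have massb: "mass G ^ k \<le> q ^ k" if GGG: "G \<in> GG" for G
    proof -
      obtain g where gS: "g \<in> Seq" and G: "G = Gf g" using GGG unfolding GG_def by auto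
      have m0: "mass G \<ge> 0" unfolding mass_def using wnn by (intro sum_nonneg) auto
      have "(\<Sum>e\<in>S' \<inter> \<Union>G. p e) \<le> (\<Sum>e\<in>S \<inter> \<Union>G. p e)"
        using pnn fS S'S by (intro sum_mono2) auto
      also have "\<dots> \<le> H * sum c G" using fam GfF[OF gS] G by simp
      also have "\<dots> \<le> H * t" using Gfc[OF gS] G H0 by (simp add: mult_left_mono)
      finally have "(\<Sum>e\<in>S' \<inter> \<Union>G. p e) \<le> H * t" .
      then have "mass G \<le> q" unfolding mass_def q_def w_def using Ppos
        by (simp add: sum_divide_distrib[symmetric] divide_right_mono)
      then show ?thesis using m0 by (intro power_mono) auto
    qed
    have "(\<Sum>g\<in>Seq. \<Prod>i<k. w (g i)) = (\<Sum>G\<in>GG. \<Sum>g\<in>{g \<in> Seq. Gf g = G}. \<Prod>i<k. w (g i))"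
      unfolding GG_def using sum.group[OF fSeq, of "Gf ` Seq" Gf "\<lambda>g. \<Prod>i<k. w (g i)"] fSeq by simp
    also have "\<dots> \<le> (\<Sum>G\<in>GG. \<Sum>g\<in>PiE {..<k} (\<lambda>_. S' \<inter> \<Union>G). \<Prod>i<k. w (g i))"
    proof (rule sum_mono)
      fix G assume "G \<in> GG"
      show "(\<Sum>g\<in>{g \<in> Seq. Gf g = G}. \<Prod>i<k. w (g i)) \<le> (\<Sum>g\<in>PiE {..<k} (\<lambda>_. S' \<inter> \<Union>G). \<Prod>i<k. w (g i))"
      proof (rule sum_mono2)
        show "finite (PiE {..<k} (\<lambda>_. S' \<inter> \<Union>G))" using fS' by (intro finite_PiE) auto
        show "{g \<in> Seq. Gf g = G} \<subseteq> PiE {..<k} (\<lambda>_. S' \<inter> \<Union>G)"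
        proof
          fix g assume "g \<in> {g \<in> Seq. Gf g = G}"
          then have gS: "g \<in> Seq" and G: "Gf g = G" by auto
          show "g \<in> PiE {..<k} (\<lambda>_. S' \<inter> \<Union>G)"
            using gS Gfcov[OF gS] G unfolding Seq_def by (auto simp: PiE_iff)
        qed
        fix g assume "g \<in> PiE {..<k} (\<lambda>_. S' \<inter> \<Union>G) - {g \<in> Seq. Gf g = G}"
        then show "0 \<le> (\<Prod>i<k. w (g i))" using wnn by (intro prod_nonneg) (auto simp: PiE_iff)
      qed
    qed
    also have "\<dots> = (\<Sum>G\<in>GG. mass G ^ k)"
    proof (rule sum.cong[OF refl])
      fix G assume "G \<in> GG"
      have "(\<Prod>i<k. \<Sum>e\<in>S' \<inter> \<Union>G. w e) = (\<Sum>g\<in>PiE {..<k} (\<lambda>_. S' \<inter> \<Union>G). \<Prod>i<k. w (g i))"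
        using fS' by (intro prod_sum_PiE) auto
      then show "(\<Sum>g\<in>PiE {..<k} (\<lambda>_. S' \<inter> \<Union>G). \<Prod>i<k. w (g i)) = mass G ^ k"
        unfolding mass_def by simp
    qed
    also have "\<dots> \<le> (\<Sum>G\<in>GG. q ^ k)" using massb by (intro sum_mono) auto
    also have "\<dots> = real (card GG) * q ^ k" by simp
    finally have ineq: "1 \<le> real (card GG) * q ^ k" using one by simp
    show False
    proof (cases "t = 0")
      case True
      then have "q = 0" unfolding q_def by simp
      then show False using ineq k1 by (simp add: zero_power)
    next
      case False
      then have tpos: "t > 0" using t0 by simp
      have cardGG: "real (card GG) \<le> 4 ^ k"
      proof (cases "card F \<ge> 2")
        case m2: True
        show ?thesis
        proof (rule count_families[OF fF m2])
          show "\<And>G. G \<in> GG \<Longrightarrow> G \<subseteq> F" using GfF unfolding GG_def by auto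
          show "finite GG" by (rule fGG)
          have "Seq \<noteq> {}"
          proof -
            have "S' \<noteq> {}" using Ppos unfolding P_def by auto
            then show ?thesis unfolding Seq_def by (simp add: PiE_eq_empty_iff)
          qed
          then show "GG \<noteq> {}" unfolding GG_def by auto
          fix G assume G: "G \<in> GG"
          then obtain g where gS: "g \<in> Seq" and G: "G = Gf g" unfolding GG_def by auto
          let ?b = "36 * ln (real (card F)) * (t / real k)"
          have b0: "?b \<ge> 0" using m2 tpos by simp
          have cb: "?b \<le> c R" if R: "R \<in> G" for R
          proof -
            obtain v where v: "v \<in> R" "v \<in> S'" using R G unfolding Gf_def by auto
            have RF: "R \<in> F" using R G GfF[OF gS] by auto
            have "36 * ln (real (card F)) * (T / real k) \<le> c R"
              using v RF S'S unfolding S_def by auto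
            moreover have "?b \<le> 36 * ln (real (card F)) * (T / real k)"
              using TT m2 k1 unfolding t_def by (intro mult_left_mono divide_right_mono) auto
            ultimately show ?thesis by linarith
          qed
          have "real (card G) * ?b = (\<Sum>R\<in>G. ?b)" by simp
          also have "\<dots> \<le> sum c G" using cb by (intro sum_mono) auto
          also have "\<dots> \<le> t" using Gfc[OF gS] G by simp
          finally have "real (card G) * (36 * ln (real (card F))) * (t / real k) \<le> t"
            by (simp add: mult.assoc)
          then have "real (card G) * (36 * ln (real (card F))) * t \<le> t * real k"
            using k1 by (simp add: field_simps)
          then show "real (card G) * (36 * ln (real (card F))) \<le> real k"
            using tpos by (simp add: mult.commute mult.left_commute)
        qed
      next
        case False
        then have "card F \<le> 1" by simp
        have "GG \<subseteq> Pow F" using GfF unfolding GG_def by auto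
        then have "card GG \<le> card (Pow F)" using fF by (intro card_mono) auto
        also have "\<dots> = 2 ^ card F" using fF by (simp add: card_Pow)
        also have "\<dots> \<le> 2 ^ 1" using \<open>card F \<le> 1\<close> by (intro power_increasing) auto
        finally have "real (card GG) \<le> 2" by simp
        also have "(2::real) \<le> 4 ^ k"
        proof -
          have "(4::real) ^ 1 \<le> 4 ^ k" by (rule power_increasing) (use k1 in auto)
          then show ?thesis by simp
        qed
        finally show ?thesis .
      qed
      have "real (card GG) * q ^ k \<le> 4 ^ k * q ^ k"
        using cardGG q0 by (intro mult_right_mono) auto
      also have "\<dots> = (4 * q) ^ k" by (simp add: power_mult_distrib)
      also have "\<dots> \<le> (4 * q) ^ 1" using q0 q12 k1 by (intro power_decreasing) auto
      also have "\<dots> < 1" using q12 by simp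
      finally show False using ineq by simp
    qed
  qed
  have "sum c (set xs) \<le> H * first_stage_cost c E0 + 12 * H * t"
    using main1 part1 key by linarith
  then show ?thesis unfolding H_def t_def by (simp add: algebra_simps)
qed

end
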